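(* Let $X_M^{(0)}, X_S^{(0)}$ be scalar random variables such that $[X_M^{(0)},X_S^{(0)}]$ is bivariate normal with mean zero, unit variances and covariance $\rho$. Let $X_S^{(t)}$ and $X_S^{(t+1)}$ be generated from $X_S^{(0)}$ by a forward noising process (independent of $X_M^{(0)}$ given $X_S^{(0)}$, and with $X_S^{(t+1)}$ independent of $(X_S^{(0)},X_M^{(0)})$ given $X_S^{(t)}$) with $X_S^{(t)}\mid X_S^{(0)}\sim\mathcal{N}(\sqrt{\alpha}\,X_S^{(0)},1-\alpha)$ and $X_S^{(t+1)}\mid X_S^{(t)}\sim\mathcal{N}(\sqrt{1-\beta}\,X_S^{(t)},\beta)$, where $\alpha,\beta\in(0,1)$. Then $\mathrm{Var}[X_S^{(t)}\mid X_S^{(t+1)}]=\beta$ and $\mathrm{Var}[X_S^{(t)}\mid X_S^{(t+1)},X_M^{(0)}]\le\beta(1-\beta\rho^2\alpha)$. *)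

theory Defs
  imports "HOL-Probability.Probability"
begin

definition normal_measure :: "real \<Rightarrow> real \<Rightarrow> real measure" where
  "normal_measure mu v =
     (if v > 0 then density lborel (normal_density mu (sqrt v)) else return borel mu)"

text \<open>X, Y are jointly (bivariate) normal with mean zero, unit variances and
  covariance rho: every linear combination a X + b Y is normal with mean 0 and
  variance a^2 + 2 a b rho + b^2 (the standard Cramer-Wold definition).\<close>
definition std_bivariate_normal ::
  "'a measure \<Rightarrow> ('a \<Rightarrow> real) \<Rightarrow> ('a \<Rightarrow> real) \<Rightarrow> real \<Rightarrow> bool" where
  "std_bivariate_normal M X Y rho \<longleftrightarrow>
     X \<in> borel_measurable M \<and> Y \<in> borel_measurable M \<and> \<bar>rho\<bar> \<le> 1 \<and>
     (\<forall>a b. distr M borel (\<lambda>w. a * X w + b * Y w)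
              = normal_measure 0 (a\<^sup>2 + 2 * a * b * rho + b\<^sup>2))"

definition sigma_rv :: "'a measure \<Rightarrow> ('a \<Rightarrow> 'b::topological_space) \<Rightarrow> 'a measure" where
  "sigma_rv M Y = vimage_algebra (space M) Y borel"

definition cond_var :: "'a measure \<Rightarrow> 'a measure \<Rightarrow> ('a \<Rightarrow> real) \<Rightarrow> 'a \<Rightarrow> real" where
  "cond_var M F X = real_cond_exp M F (\<lambda>w. (X w - real_cond_exp M F X w)\<^sup>2)"

end

theory Submission
  imports Defs
begin


lemma std_normal_distr_id: "distr std_normal_distribution borel (\<lambda>x. x) = std_normal_distribution"
  by (metis distr_id sets_lborel sets_density distr_cong)

lemma normal_measure_distr:
  assumes "v \<ge> 0"
  shows "normal_measure mu v = distr std_normal_distribution borel (\<lambda>x. mu + sqrt v * x)"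
proof (cases "v > 0")
  case True
  interpret S: prob_space std_normal_distribution using prob_space_normal_density[of 1 0] by simp
  have d: "distributed std_normal_distribution lborel (\<lambda>x. x) std_normal_density"
    unfolding distributed_def
    using distr_cong[OF refl sets_lborel[symmetric], of std_normal_distribution "\<lambda>x. x" "\<lambda>x. x"] std_normal_distr_id
    by auto
  have "distributed std_normal_distribution lborel (\<lambda>x. mu + sqrt v * x)
      (normal_density (mu + sqrt v * 0) (\<bar>sqrt v\<bar> * 1))"
    by (rule S.normal_density_affine[OF d]) (use True in auto)
  then have "distr std_normal_distribution lborel (\<lambda>x. mu + sqrt v * x) = density lborel (normal_density mu (sqrt v))"
    unfolding distributed_def using True by simp
  moreover have "distr std_normal_distribution lborel (\<lambda>x. mu + sqrt v * x) = distr std_normal_distribution borel (\<lambda>x. mu + sqrt v * x)"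
    by (rule distr_cong) auto
  ultimately show ?thesis using True unfolding normal_measure_def by simp
next
  case False
  then have "v = 0" using assms by simp
  interpret S: prob_space std_normal_distribution using prob_space_normal_density[of 1 0] by simp
  show ?thesis unfolding normal_measure_def using \<open>v = 0\<close>
    by (simp add: S.distr_const)
qed

lemma prob_space_normal_measure: "v \<ge> 0 \<Longrightarrow> prob_space (normal_measure mu v)"
  unfolding normal_measure_distr
  by (intro prob_space.prob_space_distr) (use prob_space_normal_density[of 1 0] in auto)

lemma sets_normal_measure[simp]: "sets (normal_measure mu v) = sets borel"
  unfolding normal_measure_def by auto

lemma space_normal_measure[simp]: "space (normal_measure mu v) = UNIV"
  using sets_eq_imp_space_eq[OF sets_normal_measure] by simp

lemma iexp_add: "iexp (a + b) = iexp a * iexp b"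
  by (simp add: distrib_left exp_add)

lemma char_normal_measure:
  assumes "v \<ge> 0"
  shows "(\<integral>x. iexp (a + t * x) \<partial>normal_measure mu v) = iexp (a + t * mu) * complex_of_real (exp (- (t^2 * v) / 2))"
proof -
  have "(\<integral>x. iexp (a + t * x) \<partial>normal_measure mu v) = (\<integral>x. iexp (a + t * (mu + sqrt v * x)) \<partial>std_normal_distribution)"
    unfolding normal_measure_distr[OF assms] by (subst integral_distr) auto
  also have "\<dots> = (\<integral>x. iexp (a + t * mu) * iexp ((t * sqrt v) * x) \<partial>std_normal_distribution)"
    by (rule Bochner_Integration.integral_cong) (simp_all add: exp_add[symmetric] algebra_simps)
  also have "\<dots> = iexp (a + t * mu) * char std_normal_distribution (t * sqrt v)"
    unfolding char_def by simp
  also have "\<dots> = iexp (a + t * mu) * complex_of_real (exp (- (t^2 * v) / 2))"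
    using assms by (simp add: char_std_normal_distribution power_mult_distrib)
  finally show ?thesis .
qed

lemma normal_kernel_measurable:
  assumes "v \<ge> 0" and [measurable]: "f \<in> borel_measurable N"
  shows "(\<lambda>x. normal_measure (f x) v) \<in> measurable N (subprob_algebra borel)"
proof -
  have "(\<lambda>x. distr std_normal_distribution borel (\<lambda>y. f x + sqrt v * y)) \<in> measurable N (subprob_algebra borel)"
  proof (rule measurable_distr2[where M=borel])
    show "(\<lambda>(x, y). f x + sqrt v * y) \<in> N \<Otimes>\<^sub>M borel \<rightarrow>\<^sub>M borel" by measurable
    show "(\<lambda>x. std_normal_distribution) \<in> N \<rightarrow>\<^sub>M subprob_algebra borel"
      by (rule measurable_const) (auto simp: space_subprob_algebra prob_space_imp_subprob_space prob_space_normal_density[of 1 0])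
  qed
  then show ?thesis by (simp add: normal_measure_distr[OF assms(1)])
qed


lemma borel_measurable_iexp[measurable]:
  "f \<in> borel_measurable M \<Longrightarrow> (\<lambda>x. iexp (f x)) \<in> borel_measurable M"
  by measurable

lemma levy_finite:
  fixes mu nu :: "real measure"
  assumes fm: "finite_measure mu" "finite_measure nu"
    and sets: "sets mu = sets borel" "sets nu = sets borel"
    and eq: "\<And>t. (\<integral>x. iexp (t * x) \<partial>mu) = (\<integral>x. iexp (t * x) \<partial>nu)"
  shows "mu = nu"
proof -
  interpret m: finite_measure mu by fact
  interpret n: finite_measure nu by fact
  have sp: "space mu = UNIV" "space nu = UNIV"
    using sets_eq_imp_space_eq[OF sets(1)] sets_eq_imp_space_eq[OF sets(2)] by auto
  have "complex_of_real (measure mu UNIV) = complex_of_real (measure nu UNIV)"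
    using eq[of 0] sp by simp
  then have c: "measure mu UNIV = measure nu UNIV" by simp
  define c where "c = measure mu UNIV"
  show ?thesis
  proof (cases "c = 0")
    case True
    show ?thesis
    proof (rule measure_eqI)
      show "sets mu = sets nu" using sets by simp
      fix A assume "A \<in> sets mu"
      have "emeasure mu A \<le> emeasure mu UNIV"
        by (metis emeasure_space sp(1))
      also have "\<dots> = 0" using True m.emeasure_eq_measure c_def by simp
      finally have 1: "emeasure mu A = 0" by simp
      have "emeasure nu A \<le> emeasure nu UNIV"
        by (metis emeasure_space sp(2))
      also have "\<dots> = 0" using True n.emeasure_eq_measure c_def c by simp
      finally have 2: "emeasure nu A = 0" by simp
      show "emeasure mu A = emeasure nu A" using 1 2 by simp
    qed
  next
    case False
    then have cpos: "c > 0" using c_def by (simp add: order_le_neq_trans)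
    define mu' where "mu' = density mu (\<lambda>_. ennreal (1 / c))"
    define nu' where "nu' = density nu (\<lambda>_. ennreal (1 / c))"
    have em': "emeasure mu' A = ennreal (1/c) * emeasure mu A" if "A \<in> sets mu" for A
      unfolding mu'_def using that by (simp add: emeasure_density nn_integral_cmult_indicator)
    have en': "emeasure nu' A = ennreal (1/c) * emeasure nu A" if "A \<in> sets nu" for A
      unfolding nu'_def using that by (simp add: emeasure_density nn_integral_cmult_indicator)
    have rd: "real_distribution mu'" "real_distribution nu'"
    proof -
      have "emeasure mu' (space mu') = 1"
        using em'[of UNIV] sets.top[of mu, unfolded sp(1)] cpos sp m.emeasure_eq_measure c_def unfolding mu'_def
        by (simp add: ennreal_mult[symmetric])
      then show "real_distribution mu'"
        unfolding real_distribution_def real_distribution_axioms_def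
        using prob_spaceI[OF \<open>emeasure mu' (space mu') = 1\<close>] by (simp add: mu'_def sets)
      have "emeasure nu' (space nu') = 1"
        using en'[of UNIV] sets.top[of nu, unfolded sp(2)] cpos sp n.emeasure_eq_measure c_def c unfolding nu'_def
        by (simp add: ennreal_mult[symmetric])
      then show "real_distribution nu'"
        unfolding real_distribution_def real_distribution_axioms_def
        using prob_spaceI[OF \<open>emeasure nu' (space nu') = 1\<close>] by (simp add: nu'_def sets)
    qed
    have "char mu' = char nu'"
    proof
      fix t
      have "char mu' t = (\<integral>x. (1/c) *\<^sub>R iexp (t * x) \<partial>mu)"
        unfolding char_def mu'_def using cpos by (subst integral_density) (auto simp: measurable_cong_sets[OF sets(1) refl])
      also have "\<dots> = (\<integral>x. (1/c) *\<^sub>R iexp (t * x) \<partial>nu)"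
        using eq[of t] by simp
      also have "\<dots> = char nu' t"
        unfolding char_def nu'_def using cpos by (subst integral_density) (auto simp: measurable_cong_sets[OF sets(2) refl])
      finally show "char mu' t = char nu' t" .
    qed
    then have "mu' = nu'" using Levy_uniqueness rd by blast
    show ?thesis
    proof (rule measure_eqI)
      show "sets mu = sets nu" using sets by simp
      fix A assume A: "A \<in> sets mu"
      then have A': "A \<in> sets nu" using sets by simp
      have "ennreal (1/c) * emeasure mu A = ennreal (1/c) * emeasure nu A"
        using em'[OF A] en'[OF A'] \<open>mu' = nu'\<close> by simp
      then have "ennreal c * (ennreal (1/c) * emeasure mu A) = ennreal c * (ennreal (1/c) * emeasure nu A)"
        by simp
      then show "emeasure mu A = emeasure nu A"
        using cpos by (simp add: mult.assoc[symmetric] ennreal_mult[symmetric])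
    qed
  qed
qed


definition cf_det :: "'a measure \<Rightarrow> ('i \<Rightarrow> 'a \<Rightarrow> complex) \<Rightarrow> bool" where
  "cf_det A Phi \<longleftrightarrow> (\<forall>i. Phi i \<in> borel_measurable A \<and> (\<forall>x. cmod (Phi i x) \<le> 1)) \<and>
     (\<forall>mu nu. finite_measure mu \<longrightarrow> finite_measure nu \<longrightarrow> sets mu = sets A \<longrightarrow> sets nu = sets A \<longrightarrow>
        (\<forall>i. (\<integral>x. Phi i x \<partial>mu) = (\<integral>x. Phi i x \<partial>nu)) \<longrightarrow> mu = nu)"

lemma cf_det_base: "cf_det (borel :: real measure) (\<lambda>t x. iexp (t * x))"
  unfolding cf_det_def
  by (auto intro!: levy_finite)

lemma cf_det_cong: assumes "sets A = sets B" "cf_det A Phi" shows "cf_det B Phi"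
proof -
  have "borel_measurable A = borel_measurable B" by (rule measurable_cong_sets) (simp_all add: assms)
  then show ?thesis using assms unfolding cf_det_def by auto
qed

lemma meas_sets_eq: "sets M = sets N \<Longrightarrow> f \<in> measurable N K \<Longrightarrow> f \<in> measurable M K"
  using measurable_cong_sets[of M N K K] by simp

lemma finite_measure_density_bounded:
  assumes "finite_measure mu" "g \<in> borel_measurable mu" "\<And>x. 0 \<le> g x" "\<And>x. g x \<le> K"
  shows "finite_measure (density mu (\<lambda>x. ennreal (g x)))"
proof (rule finite_measureI)
  interpret finite_measure mu by fact
  have "emeasure (density mu (\<lambda>x. ennreal (g x))) (space (density mu (\<lambda>x. ennreal (g x))))
      = (\<integral>\<^sup>+x. ennreal (g x) \<partial>mu)"
    using assms by (simp add: emeasure_density nn_integral_set_ennreal[symmetric])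
  also have "\<dots> \<le> (\<integral>\<^sup>+x. ennreal K \<partial>mu)"
    by (intro nn_integral_mono ennreal_leI) (simp add: assms(4))
  also have "\<dots> < \<infinity>" using emeasure_finite[of "space mu"] by (simp add: ennreal_mult_eq_top_iff less_top[symmetric])
  finally show "emeasure (density mu (\<lambda>x. ennreal (g x))) (space (density mu (\<lambda>x. ennreal (g x)))) \<noteq> \<infinity>"
    by simp
qed

lemma cf_det_step:
  fixes A :: "'a measure" and Phi :: "'i \<Rightarrow> 'a \<Rightarrow> complex"
  assumes det: "cf_det A Phi"
  shows "cf_det (A \<Otimes>\<^sub>M (borel :: real measure)) (\<lambda>(i, t) (a, y). Phi i a * iexp (t * y))"
proof -
  have Phim[measurable]: "Phi i \<in> borel_measurable A" for i using det unfolding cf_det_def by auto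
  have Phib: "cmod (Phi i x) \<le> 1" for i x using det unfolding cf_det_def by auto
  have detA: "\<And>mu nu. finite_measure mu \<Longrightarrow> finite_measure nu \<Longrightarrow> sets mu = sets A \<Longrightarrow> sets nu = sets A \<Longrightarrow>
        (\<And>i. (\<integral>x. Phi i x \<partial>mu) = (\<integral>x. Phi i x \<partial>nu)) \<Longrightarrow> mu = nu"
    using det unfolding cf_det_def by blast
  show ?thesis
    unfolding cf_det_def
  proof (intro conjI allI impI)
    fix p :: "'i \<times> real"
    obtain i t where p: "p = (i, t)" by force
    show "(case p of (i, t) \<Rightarrow> \<lambda>(a, y). Phi i a * iexp (t * y)) \<in> borel_measurable (A \<Otimes>\<^sub>M borel)"
      unfolding p by (simp, measurable)
    show "cmod ((case p of (i, t) \<Rightarrow> \<lambda>(a, y). Phi i a * iexp (t * y)) x) \<le> 1" for x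
      unfolding p using Phib by (auto simp: norm_mult split: prod.split)
  next
    fix mu nu :: "('a \<times> real) measure"
    assume fm: "finite_measure mu" "finite_measure nu"
      and smu: "sets mu = sets (A \<Otimes>\<^sub>M borel)" and snu: "sets nu = sets (A \<Otimes>\<^sub>M borel)"
      and H0: "\<forall>p. (\<integral>x. (case p of (i, t) \<Rightarrow> \<lambda>(a, y). Phi i a * iexp (t * y)) x \<partial>mu) =
                 (\<integral>x. (case p of (i, t) \<Rightarrow> \<lambda>(a, y). Phi i a * iexp (t * y)) x \<partial>nu)"
    interpret m: finite_measure mu by fact
    interpret n: finite_measure nu by fact
    have mm: "borel_measurable mu = borel_measurable (A \<Otimes>\<^sub>M borel)"
      using measurable_cong_sets[OF smu refl] .
    have nm: "borel_measurable nu = borel_measurable (A \<Otimes>\<^sub>M borel)"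
      using measurable_cong_sets[OF snu refl] .
    have H: "(\<integral>x. Phi i (fst x) * iexp (t * snd x) \<partial>mu) = (\<integral>x. Phi i (fst x) * iexp (t * snd x) \<partial>nu)" for i t
      using H0[rule_format, of "(i, t)"] by (simp add: case_prod_beta')
    have intm: "integrable mu f" if "f \<in> borel_measurable (A \<Otimes>\<^sub>M borel)" "\<And>x. norm (f x) \<le> K" for f :: "_ \<Rightarrow> 'c::{banach,second_countable_topology}" and K
      by (rule m.integrable_const_bound[where B=K]) (use that mm in auto)
    have intn: "integrable nu f" if "f \<in> borel_measurable (A \<Otimes>\<^sub>M borel)" "\<And>x. norm (f x) \<le> K" for f :: "_ \<Rightarrow> 'c::{banach,second_countable_topology}" and K
      by (rule n.integrable_const_bound[where B=K]) (use that nm in auto)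
    have cosexp: "complex_of_real (cos r) = (iexp r + iexp (- r)) / 2" for r
      by (subst cos_of_real[symmetric], subst cos_exp_eq) simp
    have sinexp: "complex_of_real (sin r) = (iexp r - iexp (- r)) / (2 * \<i>)" for r
      by (subst sin_of_real[symmetric], subst sin_exp_eq) simp
    have ib: "integrable M (\<lambda>x. Phi i (fst x) * iexp (t * snd x))"
      if "M = mu \<or> M = nu" for M i t
    proof -
      have "norm (Phi i (fst x) * iexp (t * snd x)) \<le> 1" for x
        using Phib by (simp add: norm_mult)
      moreover have "(\<lambda>x. Phi i (fst x) * iexp (t * snd x)) \<in> borel_measurable (A \<Otimes>\<^sub>M borel)" by measurable
      ultimately show ?thesis using that intm intn by blast
    qed
    have Hcos: "(\<integral>x. Phi i (fst x) * complex_of_real (1 + cos (v * snd x)) \<partial>mu) =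
                (\<integral>x. Phi i (fst x) * complex_of_real (1 + cos (v * snd x)) \<partial>nu)" for i v
    proof -
      have eq: "Phi i (fst x) * complex_of_real (1 + cos (v * snd x)) =
         Phi i (fst x) * iexp (0 * snd x) + (Phi i (fst x) * iexp (v * snd x) + Phi i (fst x) * iexp ((-v) * snd x)) / 2" for x
        by (simp add: cosexp algebra_simps)
      have b: "norm (Phi i (fst x) * iexp (t * snd x)) \<le> 1" for x t
        using Phib by (simp add: norm_mult)
      have "(\<integral>x. Phi i (fst x) * complex_of_real (1 + cos (v * snd x)) \<partial>mu) =
         (\<integral>x. Phi i (fst x) * iexp (0 * snd x) \<partial>mu) + ((\<integral>x. Phi i (fst x) * iexp (v * snd x) \<partial>mu) + (\<integral>x. Phi i (fst x) * iexp ((-v) * snd x) \<partial>mu)) / 2"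
        unfolding eq using ib[of mu i 0] ib[of mu i v] ib[of mu i "-v"]
        by (simp add: Bochner_Integration.integral_add Bochner_Integration.integrable_add integral_divide)
      also have "\<dots> = (\<integral>x. Phi i (fst x) * iexp (0 * snd x) \<partial>nu) + ((\<integral>x. Phi i (fst x) * iexp (v * snd x) \<partial>nu) + (\<integral>x. Phi i (fst x) * iexp ((-v) * snd x) \<partial>nu)) / 2"
        by (simp only: H)
      also have "\<dots> = (\<integral>x. Phi i (fst x) * complex_of_real (1 + cos (v * snd x)) \<partial>nu)"
        unfolding eq using ib[of nu i 0] ib[of nu i v] ib[of nu i "-v"]
        by (simp add: Bochner_Integration.integral_add Bochner_Integration.integrable_add integral_divide)
      finally show ?thesis .
    qed
    have Hsin: "(\<integral>x. Phi i (fst x) * complex_of_real (1 + sin (v * snd x)) \<partial>mu) =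
                (\<integral>x. Phi i (fst x) * complex_of_real (1 + sin (v * snd x)) \<partial>nu)" for i v
    proof -
      have eq: "Phi i (fst x) * complex_of_real (1 + sin (v * snd x)) =
         Phi i (fst x) * iexp (0 * snd x) + (Phi i (fst x) * iexp (v * snd x) - Phi i (fst x) * iexp ((-v) * snd x)) / (2 * \<i>)" for x
        by (simp add: sinexp algebra_simps)
      have b: "norm (Phi i (fst x) * iexp (t * snd x)) \<le> 1" for x t
        using Phib by (simp add: norm_mult)
      have "(\<integral>x. Phi i (fst x) * complex_of_real (1 + sin (v * snd x)) \<partial>mu) =
         (\<integral>x. Phi i (fst x) * iexp (0 * snd x) \<partial>mu) + ((\<integral>x. Phi i (fst x) * iexp (v * snd x) \<partial>mu) - (\<integral>x. Phi i (fst x) * iexp ((-v) * snd x) \<partial>mu)) / (2 * \<i>)"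
        unfolding eq using ib[of mu i 0] ib[of mu i v] ib[of mu i "-v"]
        by (simp add: Bochner_Integration.integral_add Bochner_Integration.integral_diff Bochner_Integration.integrable_diff integral_divide)
      also have "\<dots> = (\<integral>x. Phi i (fst x) * iexp (0 * snd x) \<partial>nu) + ((\<integral>x. Phi i (fst x) * iexp (v * snd x) \<partial>nu) - (\<integral>x. Phi i (fst x) * iexp ((-v) * snd x) \<partial>nu)) / (2 * \<i>)"
        by (simp only: H)
      also have "\<dots> = (\<integral>x. Phi i (fst x) * complex_of_real (1 + sin (v * snd x)) \<partial>nu)"
        unfolding eq using ib[of nu i 0] ib[of nu i v] ib[of nu i "-v"]
        by (simp add: Bochner_Integration.integral_add Bochner_Integration.integral_diff Bochner_Integration.integrable_diff integral_divide)
      finally show ?thesis .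
    qed
    define rho where "rho M g = distr (density M (\<lambda>x. ennreal (g x))) A fst" for M :: "('a \<times> real) measure" and g :: "'a \<times> real \<Rightarrow> real"
    have rho_int: "integral\<^sup>L (rho M g) f = (\<integral>x. g x *\<^sub>R f (fst x) \<partial>M)"
      if sM: "sets M = sets (A \<Otimes>\<^sub>M borel)" and gm: "g \<in> borel_measurable (A \<Otimes>\<^sub>M borel)" and gp: "\<And>x. 0 \<le> g x"
        and fmeas: "f \<in> borel_measurable A"
      for M g and f :: "'a \<Rightarrow> 'c::{banach,second_countable_topology}"
    proof -
      have "fst \<in> measurable (density M (\<lambda>x. ennreal (g x))) A"
        using measurable_cong_sets[of "density M (\<lambda>x. ennreal (g x))" "A \<Otimes>\<^sub>M borel" A A] sM by simp
      then have "integral\<^sup>L (rho M g) f = (\<integral>x. f (fst x) \<partial>density M (\<lambda>x. ennreal (g x)))"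
        unfolding rho_def by (rule integral_distr) (rule fmeas)
      also have "\<dots> = (\<integral>x. g x *\<^sub>R f (fst x) \<partial>M)"
      proof (rule integral_density)
        show "(\<lambda>x. f (fst x)) \<in> borel_measurable M"
          by (subst measurable_cong_sets[OF sM refl]) (rule measurable_compose[OF measurable_fst[of A "borel :: real measure"] fmeas])
        show "g \<in> borel_measurable M" using meas_sets_eq[OF sM gm] .
      qed (use gp in auto)
      finally show ?thesis .
    qed
    have rho_fin: "finite_measure (rho M g)"
      if "finite_measure M" "sets M = sets (A \<Otimes>\<^sub>M borel)" "g \<in> borel_measurable (A \<Otimes>\<^sub>M borel)" "\<And>x. 0 \<le> g x" "\<And>x. g x \<le> K"
      for M g K
    proof -
      have "finite_measure (density M (\<lambda>x. ennreal (g x)))"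
        by (rule finite_measure_density_bounded[where K=K]) (use that meas_sets_eq[OF that(2) that(3)] in auto)
      then show ?thesis unfolding rho_def by (rule finite_measure.finite_measure_distr)
          (use that measurable_cong_sets[of "density M (\<lambda>x. ennreal (g x))" "A \<Otimes>\<^sub>M borel" A A] in simp)
    qed
    have rho_sets: "sets (rho M g) = sets A" for M g unfolding rho_def by simp
    have gcm: "(\<lambda>x. 1 + cos (v * snd x)) \<in> borel_measurable (A \<Otimes>\<^sub>M (borel :: real measure))" for v by measurable
    have gsm: "(\<lambda>x. 1 + sin (v * snd x)) \<in> borel_measurable (A \<Otimes>\<^sub>M (borel :: real measure))" for v by measurable
    have gcp: "0 \<le> 1 + cos r" "1 + cos r \<le> 2" for r :: real using cos_ge_minus_one[of r] cos_le_one[of r] by linarith+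
    have gsp: "0 \<le> 1 + sin r" "1 + sin r \<le> 2" for r :: real using sin_ge_minus_one[of r] sin_le_one[of r] by linarith+
    have rc: "rho mu (\<lambda>x. 1 + cos (v * snd x)) = rho nu (\<lambda>x. 1 + cos (v * snd x))" for v
    proof (rule detA)
      show "finite_measure (rho mu (\<lambda>x. 1 + cos (v * snd x)))" by (rule rho_fin[of _ _ 2]) (use fm smu gcm gcp in auto)
      show "finite_measure (rho nu (\<lambda>x. 1 + cos (v * snd x)))" by (rule rho_fin[of _ _ 2]) (use fm snu gcm gcp in auto)
      fix i
      have "(\<integral>x. Phi i x \<partial>rho mu (\<lambda>x. 1 + cos (v * snd x))) = (\<integral>x. Phi i (fst x) * complex_of_real (1 + cos (v * snd x)) \<partial>mu)"
        by (subst rho_int) (use smu gcm gcp in \<open>auto simp: scaleR_conv_of_real mult.commute\<close>)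
      also have "\<dots> = (\<integral>x. Phi i (fst x) * complex_of_real (1 + cos (v * snd x)) \<partial>nu)" by (rule Hcos)
      also have "\<dots> = (\<integral>x. Phi i x \<partial>rho nu (\<lambda>x. 1 + cos (v * snd x)))"
        by (subst rho_int) (use snu gcm gcp in \<open>auto simp: scaleR_conv_of_real mult.commute\<close>)
      finally show "(\<integral>x. Phi i x \<partial>rho mu (\<lambda>x. 1 + cos (v * snd x))) = (\<integral>x. Phi i x \<partial>rho nu (\<lambda>x. 1 + cos (v * snd x)))" .
    qed (simp_all add: rho_sets)
    have rs: "rho mu (\<lambda>x. 1 + sin (v * snd x)) = rho nu (\<lambda>x. 1 + sin (v * snd x))" for v
    proof (rule detA)
      show "finite_measure (rho mu (\<lambda>x. 1 + sin (v * snd x)))" by (rule rho_fin[of _ _ 2]) (use fm smu gsm gsp in auto)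
      show "finite_measure (rho nu (\<lambda>x. 1 + sin (v * snd x)))" by (rule rho_fin[of _ _ 2]) (use fm snu gsm gsp in auto)
      fix i
      have "(\<integral>x. Phi i x \<partial>rho mu (\<lambda>x. 1 + sin (v * snd x))) = (\<integral>x. Phi i (fst x) * complex_of_real (1 + sin (v * snd x)) \<partial>mu)"
        by (subst rho_int) (use smu gsm gsp in \<open>auto simp: scaleR_conv_of_real mult.commute\<close>)
      also have "\<dots> = (\<integral>x. Phi i (fst x) * complex_of_real (1 + sin (v * snd x)) \<partial>nu)" by (rule Hsin)
      also have "\<dots> = (\<integral>x. Phi i x \<partial>rho nu (\<lambda>x. 1 + sin (v * snd x)))"
        by (subst rho_int) (use snu gsm gsp in \<open>auto simp: scaleR_conv_of_real mult.commute\<close>)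
      finally show "(\<integral>x. Phi i x \<partial>rho mu (\<lambda>x. 1 + sin (v * snd x))) = (\<integral>x. Phi i x \<partial>rho nu (\<lambda>x. 1 + sin (v * snd x)))" .
    qed (simp_all add: rho_sets)
    have rho_real: "(\<integral>x. indicator B x \<partial>rho M g) = (\<integral>x. g x * indicator B (fst x) \<partial>M)"
      if "sets M = sets (A \<Otimes>\<^sub>M borel)" "g \<in> borel_measurable (A \<Otimes>\<^sub>M borel)" "\<And>x. 0 \<le> g x" "B \<in> sets A"
      for M g B
      by (subst rho_int) (use that in auto)
    have intR: "integrable M f" if "finite_measure M" "sets M = sets (A \<Otimes>\<^sub>M borel)"
       "f \<in> borel_measurable (A \<Otimes>\<^sub>M borel)" "\<And>x. norm (f x) \<le> K" for M K and f :: "_ \<Rightarrow> real"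
      by (rule finite_measure.integrable_const_bound[where B=K]) (use that meas_sets_eq[OF that(2) that(3)] in auto)
    have IBc: "(\<integral>x. (1 + cos (v * snd x)) * indicator B (fst x) \<partial>mu) = (\<integral>x. (1 + cos (v * snd x)) * indicator B (fst x) \<partial>nu)"
      if B: "B \<in> sets A" for v B
      using arg_cong[OF rc[of v], of "\<lambda>M. integral\<^sup>L M (indicator B :: _ \<Rightarrow> real)"]
        rho_real[OF smu gcm _ B, of v] rho_real[OF snu gcm _ B, of v] gcp by simp
    have IBs: "(\<integral>x. (1 + sin (v * snd x)) * indicator B (fst x) \<partial>mu) = (\<integral>x. (1 + sin (v * snd x)) * indicator B (fst x) \<partial>nu)"
      if B: "B \<in> sets A" for v B
      using arg_cong[OF rs[of v], of "\<lambda>M. integral\<^sup>L M (indicator B :: _ \<Rightarrow> real)"]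
        rho_real[OF smu gsm _ B, of v] rho_real[OF snu gsm _ B, of v] gsp by simp
    have split: "(\<integral>x. (1 + h (v * snd x)) * indicator B (fst x) \<partial>M) = (\<integral>x. indicator B (fst x) \<partial>M) + (\<integral>x. h (v * snd x) * indicator B (fst x) \<partial>M)"
      if "finite_measure M" "sets M = sets (A \<Otimes>\<^sub>M borel)" "B \<in> sets A" "h \<in> borel_measurable borel" "\<And>r. \<bar>h r\<bar> \<le> 1"
      for M B v and h :: "real \<Rightarrow> real"
    proof -
      have "(\<integral>x. (1 + h (v * snd x)) * indicator B (fst x) \<partial>M) = (\<integral>x. indicator B (fst x) + h (v * snd x) * indicator B (fst x) \<partial>M)"
        by (simp add: algebra_simps)
      also have "\<dots> = (\<integral>x. indicator B (fst x) \<partial>M) + (\<integral>x. h (v * snd x) * indicator B (fst x) \<partial>M)"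
      proof (rule Bochner_Integration.integral_add)
        show "integrable M (\<lambda>x. indicator B (fst x) :: real)"
          by (rule intR[of _ _ 1]) (use that in auto)
        show "integrable M (\<lambda>x. h (v * snd x) * indicator B (fst x))"
          by (rule intR[of _ _ 1]) (use that in \<open>auto simp: abs_mult indicator_def\<close>)
      qed
      finally show ?thesis .
    qed
    have I1: "(\<integral>x. indicator B (fst x) \<partial>mu) = (\<integral>x. indicator B (fst x) \<partial>nu :: real)" if B: "B \<in> sets A" for B
      using IBc[OF B, of 0] by simp
    have Ic: "(\<integral>x. cos (v * snd x) * indicator B (fst x) \<partial>mu) = (\<integral>x. cos (v * snd x) * indicator B (fst x) \<partial>nu)"
      if B: "B \<in> sets A" for v B
      using IBc[OF B, of v] split[OF fm(1) smu B, of cos v] split[OF fm(2) snu B, of cos v] I1[OF B] by simp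
    have Is: "(\<integral>x. sin (v * snd x) * indicator B (fst x) \<partial>mu) = (\<integral>x. sin (v * snd x) * indicator B (fst x) \<partial>nu)"
      if B: "B \<in> sets A" for v B
      using IBs[OF B, of v] split[OF fm(1) smu B, of sin v] split[OF fm(2) snu B, of sin v] I1[OF B] by simp
    define tau where "tau M B = distr (density M (\<lambda>x. ennreal (indicator B (fst x)))) borel snd" for M :: "('a \<times> real) measure" and B
    have tau_int: "(\<integral>y. iexp (t * y) \<partial>tau M B) = complex_of_real (\<integral>x. cos (t * snd x) * indicator B (fst x) \<partial>M)
        + \<i> * complex_of_real (\<integral>x. sin (t * snd x) * indicator B (fst x) \<partial>M)"
      if "finite_measure M" "sets M = sets (A \<Otimes>\<^sub>M borel)" "B \<in> sets A" for M B t
    proof -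
      have sM: "snd \<in> measurable (density M (\<lambda>x. ennreal (indicator B (fst x)))) borel"
        using measurable_cong_sets[of "density M (\<lambda>x. ennreal (indicator B (fst x)))" "A \<Otimes>\<^sub>M borel" borel borel] that by simp
      have "(\<integral>y. iexp (t * y) \<partial>tau M B) = (\<integral>x. iexp (t * snd x) \<partial>density M (\<lambda>x. ennreal (indicator B (fst x))))"
        unfolding tau_def by (rule integral_distr[OF sM]) measurable
      also have "\<dots> = (\<integral>x. indicator B (fst x) *\<^sub>R iexp (t * snd x) \<partial>M)"
        by (rule integral_density) (use that in \<open>auto intro!: meas_sets_eq[OF that(2)]\<close>)
      also have "\<dots> = (\<integral>x. complex_of_real (cos (t * snd x) * indicator B (fst x)) + \<i> * complex_of_real (sin (t * snd x) * indicator B (fst x)) \<partial>M)"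
        by (rule Bochner_Integration.integral_cong) (auto simp: complex_eq_iff indicator_def Re_exp Im_exp)
      also have "\<dots> = complex_of_real (\<integral>x. cos (t * snd x) * indicator B (fst x) \<partial>M)
        + \<i> * complex_of_real (\<integral>x. sin (t * snd x) * indicator B (fst x) \<partial>M)"
      proof -
        have i1: "integrable M (\<lambda>x. cos (t * snd x) * indicator B (fst x))"
          by (rule intR[of _ _ 1]) (use that in \<open>auto simp: abs_mult indicator_def\<close>)
        have i2: "integrable M (\<lambda>x. sin (t * snd x) * indicator B (fst x))"
          by (rule intR[of _ _ 1]) (use that in \<open>auto simp: abs_mult indicator_def\<close>)
        show ?thesis
          apply (subst Bochner_Integration.integral_add[OF integrable_of_real[OF i1] integrable_mult_right[OF integrable_of_real[OF i2]]])
          apply (simp only: integral_mult_right_zero integral_complex_of_real)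
          done
      qed
      finally show ?thesis .
    qed
    have tau_eq: "tau mu B = tau nu B" if B: "B \<in> sets A" for B
    proof (rule levy_finite)
      show "finite_measure (tau mu B)" unfolding tau_def
        by (rule finite_measure.finite_measure_distr, rule finite_measure_density_bounded[where K=1])
           (use fm smu B in \<open>auto intro!: meas_sets_eq[OF smu]\<close>)
      show "finite_measure (tau nu B)" unfolding tau_def
        by (rule finite_measure.finite_measure_distr, rule finite_measure_density_bounded[where K=1])
           (use fm snu B in \<open>auto intro!: meas_sets_eq[OF snu]\<close>)
      show "sets (tau mu B) = sets borel" "sets (tau nu B) = sets borel" unfolding tau_def by simp_all
      fix t
      show "(\<integral>x. iexp (t * x) \<partial>tau mu B) = (\<integral>x. iexp (t * x) \<partial>tau nu B)"
        using tau_int[OF fm(1) smu B, of t] tau_int[OF fm(2) snu B, of t] Ic[OF B, of t] Is[OF B, of t] by simp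
    qed
    have tau_em: "emeasure M (B \<times> C) = emeasure (tau M B) C"
      if "sets M = sets (A \<Otimes>\<^sub>M borel)" "B \<in> sets A" "C \<in> sets borel" for M B C
    proof -
      have sp: "space M = space A \<times> UNIV" using sets_eq_imp_space_eq[OF that(1)] by (simp add: space_pair_measure)
      have BC: "B \<times> C \<in> sets M" using that by simp
      have sM: "snd \<in> measurable (density M (\<lambda>x. ennreal (indicator B (fst x)))) borel"
        using measurable_cong_sets[of "density M (\<lambda>x. ennreal (indicator B (fst x)))" "A \<Otimes>\<^sub>M borel" borel borel] that by simp
      note [measurable] = that(2) that(3)
      have sndM: "snd \<in> measurable M borel" by (rule meas_sets_eq[OF that(1)]) measurable
      have S: "snd -` C \<inter> space M \<in> sets M" using measurable_sets[OF sndM that(3)] .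
      have gM: "(\<lambda>x. ennreal (indicator B (fst x))) \<in> borel_measurable M"
        by (rule meas_sets_eq[OF that(1)]) measurable
      have "emeasure (tau M B) C = emeasure (density M (\<lambda>x. ennreal (indicator B (fst x)))) (snd -` C \<inter> space (density M (\<lambda>x. ennreal (indicator B (fst x)))))"
        unfolding tau_def by (rule emeasure_distr[OF sM that(3)])
      also have "\<dots> = emeasure (density M (\<lambda>x. ennreal (indicator B (fst x)))) (snd -` C \<inter> space M)"
        by simp
      also have "\<dots> = (\<integral>\<^sup>+x. ennreal (indicator B (fst x)) * indicator (snd -` C \<inter> space M) x \<partial>M)"
        by (rule emeasure_density[OF gM S])
      also have "\<dots> = (\<integral>\<^sup>+x. indicator (B \<times> C) x \<partial>M)"
        by (rule nn_integral_cong) (auto simp: indicator_def sp)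
      also have "\<dots> = emeasure M (B \<times> C)" using BC by simp
      finally show ?thesis by simp
    qed
    show "mu = nu"
    proof (rule measure_eqI_generator_eq[OF Int_stable_pair_measure_generator[of A "borel :: real measure"]])
      show "{a \<times> b |a b. a \<in> sets A \<and> b \<in> sets borel} \<subseteq> Pow (space A \<times> space (borel :: real measure))"
        using sets.sets_into_space by fastforce
      show "sets mu = sigma_sets (space A \<times> space borel) {a \<times> b |a b. a \<in> sets A \<and> b \<in> sets borel}"
        by (subst smu) (rule sets_pair_measure)
      show "sets nu = sigma_sets (space A \<times> space borel) {a \<times> b |a b. a \<in> sets A \<and> b \<in> sets borel}"
        by (subst snu) (rule sets_pair_measure)
      fix X assume "X \<in> {a \<times> b |a b. a \<in> sets A \<and> b \<in> sets (borel :: real measure)}"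
      then obtain B C where X: "X = B \<times> C" "B \<in> sets A" "C \<in> sets (borel :: real measure)" by blast
      show "emeasure mu X = emeasure nu X"
        unfolding X(1) tau_em[OF smu X(2,3)] tau_em[OF snu X(2,3)] tau_eq[OF X(2)] ..
    next
      show "range (\<lambda>i. space A \<times> space (borel :: real measure)) \<subseteq> {a \<times> b |a b. a \<in> sets A \<and> b \<in> sets borel}"
        by blast
      show "(\<Union>i. space A \<times> space (borel :: real measure)) = space A \<times> space borel" by simp
      show "emeasure mu (space A \<times> space (borel :: real measure)) \<noteq> \<infinity>" for i :: nat
        using m.emeasure_finite by simp
    qed
  qed
qed


lemma integral_bind_c:
  fixes f :: "_ \<Rightarrow> complex"
  assumes fm[measurable]: "f \<in> borel_measurable K"
    and fb: "\<And>x. cmod (f x) \<le> B"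
    and N[measurable]: "N \<in> measurable M (subprob_algebra K)"
    and M: "subprob_space M"
  shows "integral\<^sup>L (bind M N) f = (\<integral>x. integral\<^sup>L (N x) f \<partial>M)"
proof -
  interpret M: subprob_space M by fact
  have sb: "subprob_space (bind M N)" by (rule subprob_space_bind[OF M N])
  interpret sb: subprob_space "bind M N" by fact
  have sets_b: "sets (bind M N) = sets K"
    using M.subprob_not_empty by (simp add: sets_bind[OF sets_kernel[OF N]])
  have fmb: "f \<in> borel_measurable (bind M N)" using meas_sets_eq[OF sets_b fm] .
  have intb: "integrable (bind M N) f"
    by (rule sb.integrable_const_bound[where B=B]) (use fb fmb in auto)
  have Nx: "subprob_space (N x)" if "x \<in> space M" for x using subprob_space_kernel[OF N that] .
  have sNx: "sets (N x) = sets K" if "x \<in> space M" for x using sets_kernel[OF N that] .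
  have intNx: "integrable (N x) f" if x: "x \<in> space M" for x
  proof -
    interpret Nx: subprob_space "N x" using Nx[OF x] .
    show ?thesis by (rule Nx.integrable_const_bound[where B=B]) (use fb meas_sets_eq[OF sNx[OF x] fm] in auto)
  qed
  have inm: "(\<lambda>x. integral\<^sup>L (N x) f) \<in> borel_measurable M"
    by measurable
  have inb: "cmod (integral\<^sup>L (N x) f) \<le> B" if x: "x \<in> space M" for x
  proof -
    interpret Nx: subprob_space "N x" using Nx[OF x] .
    have "cmod (integral\<^sup>L (N x) f) \<le> (\<integral>y. cmod (f y) \<partial>N x)" by (rule integral_norm_bound)
    also have "\<dots> \<le> (\<integral>y. B \<partial>N x)"
      by (rule integral_mono) (use fb intNx[OF x] in auto)
    also have "\<dots> = B * measure (N x) (space (N x))" by simp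
    also have "\<dots> \<le> B"
    proof -
      have "0 \<le> B" using fb[of undefined] norm_ge_zero order_trans by blast
      then show ?thesis using Nx.subprob_measure_le_1 mult_left_le by blast
    qed
    finally show ?thesis .
  qed
  have intM: "integrable M (\<lambda>x. integral\<^sup>L (N x) f)"
    by (rule M.integrable_const_bound[where B=B]) (use inm inb in auto)
  have bnd1: "AE x in M. emeasure (N x) (space (N x)) \<le> ennreal 1"
    using Nx by (auto intro!: AE_I2 subprob_space.subprob_emeasure_le_1)
  have re: "Re (integral\<^sup>L (bind M N) f) = Re (\<integral>x. integral\<^sup>L (N x) f \<partial>M)"
  proof -
    have "Re (integral\<^sup>L (bind M N) f) = (\<integral>y. Re (f y) \<partial>bind M N)" using intb by simp
    also have "\<dots> = (\<integral>x. (\<integral>y. Re (f y) \<partial>N x) \<partial>M)"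
      by (rule integral_bind[where K=K and B=B and B'=1], measurable,
          use order_trans[OF abs_Re_le_cmod fb] in blast, rule N, rule subprob_space.axioms(1)[OF M], rule bnd1)
    also have "\<dots> = (\<integral>x. Re (integral\<^sup>L (N x) f) \<partial>M)"
      by (rule integral_cong_AE) (use intNx in \<open>auto intro!: AE_I2\<close>)
    also have "\<dots> = Re (\<integral>x. integral\<^sup>L (N x) f \<partial>M)" using intM by simp
    finally show ?thesis .
  qed
  have im: "Im (integral\<^sup>L (bind M N) f) = Im (\<integral>x. integral\<^sup>L (N x) f \<partial>M)"
  proof -
    have "Im (integral\<^sup>L (bind M N) f) = (\<integral>y. Im (f y) \<partial>bind M N)" using intb by simp
    also have "\<dots> = (\<integral>x. (\<integral>y. Im (f y) \<partial>N x) \<partial>M)"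
      by (rule integral_bind[where K=K and B=B and B'=1], measurable,
          use order_trans[OF abs_Im_le_cmod fb] in blast, rule N, rule subprob_space.axioms(1)[OF M], rule bnd1)
    also have "\<dots> = (\<integral>x. Im (integral\<^sup>L (N x) f) \<partial>M)"
      by (rule integral_cong_AE) (use intNx in \<open>auto intro!: AE_I2\<close>)
    also have "\<dots> = Im (\<integral>x. integral\<^sup>L (N x) f \<partial>M)" using intM by simp
    finally show ?thesis .
  qed
  show ?thesis using re im by (simp add: complex_eq_iff)
qed


lemma quad_nonneg:
  fixes a b rho :: real
  assumes "\<bar>rho\<bar> \<le> 1"
  shows "0 \<le> a\<^sup>2 + 2 * a * b * rho + b\<^sup>2"
proof -
  have h1: "\<bar>a * b * rho\<bar> \<le> \<bar>a * b\<bar>"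
    using assms by (simp add: abs_mult mult_left_le)
  have "0 \<le> (\<bar>a\<bar> - \<bar>b\<bar>)\<^sup>2" by simp
  then have h2: "2 * \<bar>a * b\<bar> \<le> a\<^sup>2 + b\<^sup>2"
    by (simp add: power2_eq_square algebra_simps abs_mult abs_mult_self_eq)
  have "- \<bar>a * b * rho\<bar> \<le> a * b * rho" by simp
  then show ?thesis using h1 h2 by (simp add: algebra_simps)
qed

locale model =
  fixes M :: "'a measure" and XM0 XS0 XSt XSt1 :: "'a \<Rightarrow> real" and rho alpha beta :: real
  assumes ps: "prob_space M"
    and bn: "std_bivariate_normal M XM0 XS0 rho"
    and mt[measurable]: "XSt \<in> borel_measurable M" and mt1[measurable]: "XSt1 \<in> borel_measurable M"
    and a0: "0 < alpha" and a1: "alpha < 1" and b0: "0 < beta" and b1: "beta < 1"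
    and law: "distr M borel (\<lambda>w. (XM0 w, XS0 w, XSt w, XSt1 w)) =
         distr M borel (\<lambda>w. (XM0 w, XS0 w)) \<bind>
           (\<lambda>(m, s). normal_measure (sqrt alpha * s) (1 - alpha) \<bind>
             (\<lambda>x. normal_measure (sqrt (1 - beta) * x) beta \<bind>
               (\<lambda>y. return borel (m, s, x, y))))"
begin

sublocale prob_space M by (rule ps)

lemma m0[measurable]: "XM0 \<in> borel_measurable M" and ms0[measurable]: "XS0 \<in> borel_measurable M"
  and rho1: "\<bar>rho\<bar> \<le> 1"
  and lin: "\<And>a b. distr M borel (\<lambda>w. a * XM0 w + b * XS0 w) = normal_measure 0 (a\<^sup>2 + 2 * a * b * rho + b\<^sup>2)"
  using bn unfolding std_bivariate_normal_def by auto

lemma k1[measurable]: "f \<in> borel_measurable N \<Longrightarrow> (\<lambda>x. normal_measure (f x) (1 - alpha)) \<in> N \<rightarrow>\<^sub>M subprob_algebra borel"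
  using normal_kernel_measurable[of "1 - alpha" f N] a1 by simp

lemma k2[measurable]: "f \<in> borel_measurable N \<Longrightarrow> (\<lambda>x. normal_measure (f x) beta) \<in> N \<rightarrow>\<^sub>M subprob_algebra borel"
  using normal_kernel_measurable[of beta f N] b0 by simp

definition "K2 (m::real) (s::real) x = normal_measure (sqrt (1 - beta) * x) beta \<bind> (\<lambda>y. return borel (m, s, x, y))"

lemma K2_distr: "K2 m s x = distr (normal_measure (sqrt (1 - beta) * x) beta) borel (\<lambda>y. (m, s, x, y))"
proof -
  have "(\<lambda>y::real. (m, s, x, y)) \<in> (borel :: real measure) \<rightarrow>\<^sub>M (borel :: (real \<times> real \<times> real \<times> real) measure)"
    unfolding borel_prod[symmetric] by measurable
  then have "(\<lambda>y::real. (m, s, x, y)) \<in> normal_measure (sqrt (1 - beta) * x) beta \<rightarrow>\<^sub>M (borel :: (real \<times> real \<times> real \<times> real) measure)"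
    by (rule meas_sets_eq[OF sets_normal_measure])
  then show ?thesis unfolding K2_def by (intro bind_return_distr') auto
qed

lemma kern_meas: "(\<lambda>(m, s). normal_measure (sqrt alpha * s) (1 - alpha) \<bind>
             (\<lambda>x. normal_measure (sqrt (1 - beta) * x) beta \<bind>
               (\<lambda>y. return borel (m, s, x, y)))) \<in> (borel :: (real \<times> real) measure) \<rightarrow>\<^sub>M subprob_algebra borel"
  by (subst (1) borel_prod[symmetric]) measurable

definition "Q c1 c2 c3 c4 = c4^2 * beta + (c3 + c4 * sqrt (1 - beta))^2 * (1 - alpha) +
   (c1^2 + 2 * c1 * (c2 + (c3 + c4 * sqrt (1 - beta)) * sqrt alpha) * rho + (c2 + (c3 + c4 * sqrt (1 - beta)) * sqrt alpha)^2)"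

definition "ff c1 c2 c3 c4 = (\<lambda>(m::real, s::real, x::real, y::real). iexp (c1 * m + c2 * s + c3 * x + c4 * y))"

lemma ff_meas[measurable]: "ff c1 c2 c3 c4 \<in> borel_measurable borel"
  unfolding ff_def borel_prod[symmetric] by measurable

lemma ff_bound: "cmod (ff c1 c2 c3 c4 p) \<le> 1"
  unfolding ff_def by (auto split: prod.split)

lemma K2_meas[measurable]: "(\<lambda>x. K2 m s x) \<in> borel \<rightarrow>\<^sub>M subprob_algebra borel"
proof -
  have 1: "(\<lambda>p::real\<times>real. (m, s, fst p, snd p)) \<in> (borel \<Otimes>\<^sub>M borel) \<rightarrow>\<^sub>M (borel::(real\<times>real\<times>real\<times>real) measure)"
    unfolding borel_prod[symmetric] by measurable
  have 2: "(\<lambda>p::real\<times>real. return borel (m, s, fst p, snd p)) \<in> (borel \<Otimes>\<^sub>M borel) \<rightarrow>\<^sub>M subprob_algebra (borel::(real\<times>real\<times>real\<times>real) measure)"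
    using measurable_compose[OF 1 return_measurable] .
  show ?thesis unfolding K2_def
    by (rule measurable_bind[OF _ 2]) measurable
qed

lemma inner2: "integral\<^sup>L (K2 m s x) (ff c1 c2 c3 c4) =
   iexp (c1 * m + c2 * s + (c3 + c4 * sqrt (1 - beta)) * x) * complex_of_real (exp (- (c4^2 * beta) / 2))"
proof -
  have "(\<lambda>y::real. (m, s, x, y)) \<in> (borel :: real measure) \<rightarrow>\<^sub>M (borel :: (real \<times> real \<times> real \<times> real) measure)"
    unfolding borel_prod[symmetric] by measurable
  then have mm: "(\<lambda>y::real. (m, s, x, y)) \<in> normal_measure (sqrt (1 - beta) * x) beta \<rightarrow>\<^sub>M (borel :: (real \<times> real \<times> real \<times> real) measure)"
    by (rule meas_sets_eq[OF sets_normal_measure])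
  have "integral\<^sup>L (K2 m s x) (ff c1 c2 c3 c4) = (\<integral>y. ff c1 c2 c3 c4 (m, s, x, y) \<partial>normal_measure (sqrt (1 - beta) * x) beta)"
    unfolding K2_distr by (rule integral_distr[OF mm ff_meas])
  also have "\<dots> = (\<integral>y. iexp ((c1 * m + c2 * s + c3 * x) + c4 * y) \<partial>normal_measure (sqrt (1 - beta) * x) beta)"
    unfolding ff_def by (simp add: add.assoc)
  also have "\<dots> = iexp ((c1 * m + c2 * s + c3 * x) + c4 * (sqrt (1 - beta) * x)) * complex_of_real (exp (- (c4^2 * beta) / 2))"
    by (rule char_normal_measure) (use b0 in simp)
  also have "(c1 * m + c2 * s + c3 * x) + c4 * (sqrt (1 - beta) * x) = c1 * m + c2 * s + (c3 + c4 * sqrt (1 - beta)) * x"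
    by (simp add: algebra_simps)
  finally show ?thesis .
qed

lemma inner1: "integral\<^sup>L (normal_measure (sqrt alpha * s) (1 - alpha) \<bind> K2 m s) (ff c1 c2 c3 c4) =
   iexp (c1 * m + (c2 + (c3 + c4 * sqrt (1 - beta)) * sqrt alpha) * s) *
   complex_of_real (exp (- (c4^2 * beta) / 2) * exp (- ((c3 + c4 * sqrt (1 - beta))^2 * (1 - alpha)) / 2))"
proof -
  define d3 where "d3 = c3 + c4 * sqrt (1 - beta)"
  have sp: "subprob_space (normal_measure (sqrt alpha * s) (1 - alpha))"
    by (intro prob_space_imp_subprob_space prob_space_normal_measure) (use a1 in simp)
  have "integral\<^sup>L (normal_measure (sqrt alpha * s) (1 - alpha) \<bind> K2 m s) (ff c1 c2 c3 c4) =
      (\<integral>x. integral\<^sup>L (K2 m s x) (ff c1 c2 c3 c4) \<partial>normal_measure (sqrt alpha * s) (1 - alpha))"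
    by (rule integral_bind_c[OF ff_meas ff_bound _ sp]) (rule meas_sets_eq[OF sets_normal_measure K2_meas])
  also have "\<dots> = (\<integral>x. complex_of_real (exp (- (c4^2 * beta) / 2)) * iexp ((c1 * m + c2 * s) + d3 * x) \<partial>normal_measure (sqrt alpha * s) (1 - alpha))"
    unfolding inner2 d3_def by (simp add: algebra_simps)
  also have "\<dots> = complex_of_real (exp (- (c4^2 * beta) / 2)) * (iexp ((c1 * m + c2 * s) + d3 * (sqrt alpha * s)) * complex_of_real (exp (- (d3^2 * (1 - alpha)) / 2)))"
    using char_normal_measure[where v="1 - alpha" and a="c1 * m + c2 * s" and t=d3 and mu="sqrt alpha * s"] a1 by simp
  also have "\<dots> = iexp (c1 * m + (c2 + d3 * sqrt alpha) * s) *
     complex_of_real (exp (- (c4^2 * beta) / 2) * exp (- (d3^2 * (1 - alpha)) / 2))"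
    by (simp add: algebra_simps)
  finally show ?thesis unfolding d3_def .
qed

lemma T_meas[measurable]: "(\<lambda>w. (XM0 w, XS0 w, XSt w, XSt1 w)) \<in> M \<rightarrow>\<^sub>M borel"
  unfolding borel_prod[symmetric] by measurable

lemma P2_meas[measurable]: "(\<lambda>w. (XM0 w, XS0 w)) \<in> M \<rightarrow>\<^sub>M borel"
  unfolding borel_prod[symmetric] by measurable

lemma charQ: "(\<integral>w. iexp (c1 * XM0 w + c2 * XS0 w + c3 * XSt w + c4 * XSt1 w) \<partial>M) =
   complex_of_real (exp (- Q c1 c2 c3 c4 / 2))"
proof -
  define d2 where "d2 = c2 + (c3 + c4 * sqrt (1 - beta)) * sqrt alpha"
  define C where "C = exp (- (c4^2 * beta) / 2) * exp (- ((c3 + c4 * sqrt (1 - beta))^2 * (1 - alpha)) / 2)"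
  define D where "D = distr M borel (\<lambda>w. (XM0 w, XS0 w))"
  have spD: "subprob_space D" unfolding D_def
    by (rule prob_space_imp_subprob_space, rule prob_space_distr) measurable
  have "(\<integral>w. iexp (c1 * XM0 w + c2 * XS0 w + c3 * XSt w + c4 * XSt1 w) \<partial>M) =
      (\<integral>w. ff c1 c2 c3 c4 (XM0 w, XS0 w, XSt w, XSt1 w) \<partial>M)"
    unfolding ff_def by simp
  also have "\<dots> = integral\<^sup>L (distr M borel (\<lambda>w. (XM0 w, XS0 w, XSt w, XSt1 w))) (ff c1 c2 c3 c4)"
    by (rule integral_distr[symmetric]) measurable
  also have "\<dots> = integral\<^sup>L (D \<bind> (\<lambda>(m, s). normal_measure (sqrt alpha * s) (1 - alpha) \<bind> K2 m s)) (ff c1 c2 c3 c4)"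
    unfolding law D_def K2_def ..
  also have "\<dots> = (\<integral>p. integral\<^sup>L ((\<lambda>(m, s). normal_measure (sqrt alpha * s) (1 - alpha) \<bind> K2 m s) p) (ff c1 c2 c3 c4) \<partial>D)"
  proof (rule integral_bind_c[OF ff_meas ff_bound _ spD])
    show "(\<lambda>(m, s). normal_measure (sqrt alpha * s) (1 - alpha) \<bind> K2 m s) \<in> D \<rightarrow>\<^sub>M subprob_algebra borel"
      unfolding D_def K2_def by (rule meas_sets_eq[OF _ kern_meas]) simp
  qed
  also have "\<dots> = (\<integral>p. complex_of_real C * iexp (c1 * fst p + d2 * snd p) \<partial>D)"
  proof (rule Bochner_Integration.integral_cong)
    fix p :: "real \<times> real"
    obtain m s where p: "p = (m, s)" by force
    show "integral\<^sup>L ((\<lambda>(m, s). normal_measure (sqrt alpha * s) (1 - alpha) \<bind> K2 m s) p) (ff c1 c2 c3 c4) =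
        complex_of_real C * iexp (c1 * fst p + d2 * snd p)"
      unfolding p by (simp only: case_prod_conv inner1 fst_conv snd_conv) (simp add: C_def d2_def mult.commute)
  qed simp
  also have "\<dots> = complex_of_real C * (\<integral>p. iexp (c1 * fst p + d2 * snd p) \<partial>D)"
    by simp
  also have "(\<integral>p. iexp (c1 * fst p + d2 * snd p) \<partial>D) = (\<integral>w. iexp (c1 * XM0 w + d2 * XS0 w) \<partial>M)"
    unfolding D_def by (subst integral_distr) (auto intro!: P2_meas, unfold borel_prod[symmetric], measurable)
  also have "\<dots> = (\<integral>z. iexp (0 + 1 * z) \<partial>distr M borel (\<lambda>w. c1 * XM0 w + d2 * XS0 w))"
    by (subst integral_distr) auto
  also have "\<dots> = complex_of_real (exp (- (c1\<^sup>2 + 2 * c1 * d2 * rho + d2\<^sup>2) / 2))"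
    unfolding lin by (subst char_normal_measure) (auto simp: quad_nonneg[OF rho1])
  finally have "(\<integral>w. iexp (c1 * XM0 w + c2 * XS0 w + c3 * XSt w + c4 * XSt1 w) \<partial>M) =
     complex_of_real C * complex_of_real (exp (- (c1\<^sup>2 + 2 * c1 * d2 * rho + d2\<^sup>2) / 2))" .
  also have "\<dots> = complex_of_real (exp (- (c4^2 * beta) / 2 + - ((c3 + c4 * sqrt (1 - beta))^2 * (1 - alpha)) / 2
       + - (c1\<^sup>2 + 2 * c1 * d2 * rho + d2\<^sup>2) / 2))"
    unfolding C_def by (simp only: of_real_mult[symmetric] exp_add[symmetric])
  also have "- (c4^2 * beta) / 2 + - ((c3 + c4 * sqrt (1 - beta))^2 * (1 - alpha)) / 2
       + - (c1\<^sup>2 + 2 * c1 * d2 * rho + d2\<^sup>2) / 2 = - Q c1 c2 c3 c4 / 2"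
    unfolding Q_def d2_def by (simp add: field_simps)
  finally show ?thesis .
qed

end


lemma prod_integral:
  fixes f :: "'b \<Rightarrow> complex" and g :: "'c \<Rightarrow> complex"
  assumes pA: "prob_space A" and pB: "prob_space B"
    and fm[measurable]: "f \<in> borel_measurable A" and gm[measurable]: "g \<in> borel_measurable B"
    and fb: "\<And>x. cmod (f x) \<le> 1" and gb: "\<And>x. cmod (g x) \<le> 1"
  shows "(\<integral>p. f (fst p) * g (snd p) \<partial>(A \<Otimes>\<^sub>M B)) = (\<integral>x. f x \<partial>A) * (\<integral>y. g y \<partial>B)"
proof -
  interpret A: prob_space A by fact
  interpret B: prob_space B by fact
  interpret P: pair_prob_space A B ..
  have int: "integrable (A \<Otimes>\<^sub>M B) (\<lambda>p. f (fst p) * g (snd p))"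
  proof (rule finite_measure.integrable_const_bound[OF prob_space.axioms(1)[OF prob_space_pair[OF pA pB]], where B=1])
    show "AE x in A \<Otimes>\<^sub>M B. cmod (f (fst x) * g (snd x)) \<le> 1"
      using fb gb by (auto simp: norm_mult intro!: mult_le_one)
  qed measurable
  have "(\<integral>p. f (fst p) * g (snd p) \<partial>(A \<Otimes>\<^sub>M B)) = (\<integral>x. (\<integral>y. f (fst (x, y)) * g (snd (x, y)) \<partial>B) \<partial>A)"
    by (rule P.integral_fst'[OF int, symmetric])
  also have "\<dots> = (\<integral>x. f x * (\<integral>y. g y \<partial>B) \<partial>A)" by simp
  also have "\<dots> = (\<integral>x. f x \<partial>A) * (\<integral>y. g y \<partial>B)" by simp
  finally show ?thesis .
qed

lemma (in prob_space) indep_law_cf: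
  fixes W :: "'a \<Rightarrow> 'b" and R :: "'a \<Rightarrow> real" and S :: "'b measure" and Phi :: "'i \<Rightarrow> 'b \<Rightarrow> complex"
  assumes det: "cf_det S Phi" and W[measurable]: "W \<in> M \<rightarrow>\<^sub>M S" and R[measurable]: "R \<in> borel_measurable M"
    and H: "\<And>i t. (\<integral>w. Phi i (W w) * iexp (t * R w) \<partial>M) = (\<integral>w. Phi i (W w) \<partial>M) * (\<integral>w. iexp (t * R w) \<partial>M)"
  shows "distr M (S \<Otimes>\<^sub>M borel) (\<lambda>w. (W w, R w)) = distr M S W \<Otimes>\<^sub>M distr M borel R"
proof -
  have Phim[measurable]: "Phi i \<in> borel_measurable S" for i using det unfolding cf_det_def by auto
  have Phib: "cmod (Phi i x) \<le> 1" for i x using det unfolding cf_det_def by auto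
  have det2: "cf_det (S \<Otimes>\<^sub>M (borel :: real measure)) (\<lambda>(i, t) (a, y). Phi i a * iexp (t * y))"
    by (rule cf_det_step[OF det])
  have pW: "prob_space (distr M S W)" by (rule prob_space_distr) measurable
  have pR: "prob_space (distr M borel R)" by (rule prob_space_distr) measurable
  define mu where "mu = distr M (S \<Otimes>\<^sub>M borel) (\<lambda>w. (W w, R w))"
  define nu where "nu = distr M S W \<Otimes>\<^sub>M distr M borel R"
  have fmu: "finite_measure mu" unfolding mu_def
    by (rule prob_space.axioms(1), rule prob_space_distr) measurable
  have fnu: "finite_measure nu" unfolding nu_def
    by (rule prob_space.axioms(1), rule prob_space_pair[OF pW pR])
  have smu: "sets mu = sets (S \<Otimes>\<^sub>M borel)" unfolding mu_def by simp
  have snu: "sets nu = sets (S \<Otimes>\<^sub>M borel)" unfolding nu_def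
    by (rule sets_pair_measure_cong) simp_all
  have "mu = nu"
  proof (rule det2[unfolded cf_det_def, THEN conjunct2, rule_format, OF fmu fnu smu snu])
    fix p :: "'i \<times> real"
    obtain i t where p: "p = (i, t)" by force
    have "(\<integral>x. (case p of (i, t) \<Rightarrow> \<lambda>(a, y). Phi i a * iexp (t * y)) x \<partial>mu) = (\<integral>w. Phi i (W w) * iexp (t * R w) \<partial>M)"
      unfolding mu_def p by (subst integral_distr) (auto simp: case_prod_beta')
    also have "\<dots> = (\<integral>w. Phi i (W w) \<partial>M) * (\<integral>w. iexp (t * R w) \<partial>M)" by (rule H)
    also have "\<dots> = (\<integral>a. Phi i a \<partial>distr M S W) * (\<integral>y. iexp (t * y) \<partial>distr M borel R)"
      by (subst (1 2) integral_distr) auto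
    also have "\<dots> = (\<integral>q. Phi i (fst q) * iexp (t * snd q) \<partial>nu)"
      unfolding nu_def by (rule prod_integral[symmetric, OF pW pR]) (auto simp: Phib)
    also have "\<dots> = (\<integral>x. (case p of (i, t) \<Rightarrow> \<lambda>(a, y). Phi i a * iexp (t * y)) x \<partial>nu)"
      unfolding p by (simp add: case_prod_beta')
    finally show "(\<integral>x. (case p of (i, t) \<Rightarrow> \<lambda>(a, y). Phi i a * iexp (t * y)) x \<partial>mu) =
       (\<integral>x. (case p of (i, t) \<Rightarrow> \<lambda>(a, y). Phi i a * iexp (t * y)) x \<partial>nu)" .
  qed
  then show ?thesis unfolding mu_def nu_def .
qed

lemma (in prob_space) cond_exp_indep_const:
  fixes W :: "'a \<Rightarrow> 'b::topological_space" and R :: "'a \<Rightarrow> real"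
  assumes W[measurable]: "W \<in> borel_measurable M" and R[measurable]: "R \<in> borel_measurable M"
    and law: "distr M (borel \<Otimes>\<^sub>M borel) (\<lambda>w. (W w, R w)) = distr M borel W \<Otimes>\<^sub>M distr M borel R"
    and h[measurable]: "h \<in> borel_measurable borel" and inth: "integrable M (\<lambda>w. h (R w))"
  shows "AE w in M. real_cond_exp M (sigma_rv M W) (\<lambda>w. h (R w)) w = (\<integral>w. h (R w) \<partial>M)"
proof -
  define F where "F = sigma_rv M W"
  have Fv: "F = vimage_algebra (space M) W borel" unfolding F_def sigma_rv_def ..
  have subalg: "subalgebra M F"
    unfolding subalgebra_def Fv using sets_image_in_sets[OF refl W] by simp
  interpret finite_measure_subalgebra M F
    by unfold_locales (rule subalg)
  define c where "c = (\<integral>w. h (R w) \<partial>M)"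
  have pW: "prob_space (distr M borel W)" by (rule prob_space_distr) measurable
  have pR: "prob_space (distr M borel R)" by (rule prob_space_distr) measurable
  interpret P: pair_prob_space "distr M borel W" "distr M borel R"
    by (intro pair_prob_space.intro pair_sigma_finite.intro pW pR prob_space_imp_sigma_finite)
  have "AE w in M. real_cond_exp M F (\<lambda>w. h (R w)) w = c"
  proof (rule real_cond_exp_charact)
    fix A assume A: "A \<in> sets F"
    then obtain B where B: "B \<in> sets borel" and AB: "A = W -` B \<inter> space M"
      unfolding Fv using sets_vimage_algebra2[of W "space M" borel] measurable_space[OF W] by auto
    note B[measurable]
    have AM: "A \<in> sets M" using A subalg unfolding subalgebra_def by auto
    have ind: "indicator A w = indicator B (W w)" if "w \<in> space M" for w :: 'a
      using that unfolding AB by (simp add: indicator_def)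
    have int1: "integrable M (\<lambda>w. indicator B (W w) * h (R w))"
    proof -
      have "integrable M (\<lambda>w. h (R w) * indicator A w)" by (rule integrable_real_mult_indicator[OF AM inth])
      moreover have "integrable M (\<lambda>w. h (R w) * indicator A w) = integrable M (\<lambda>w. indicator B (W w) * h (R w))"
        by (rule Bochner_Integration.integrable_cong) (auto simp: ind mult.commute)
      ultimately show ?thesis by simp
    qed
    have intP: "integrable (distr M borel W \<Otimes>\<^sub>M distr M borel R) (\<lambda>p. indicator B (fst p) * h (snd p))"
      unfolding law[symmetric] using int1 by (subst integrable_distr_eq) (auto simp: B)
    have "(\<integral>w\<in>A. h (R w) \<partial>M) = (\<integral>w. indicator B (W w) * h (R w) \<partial>M)"
      unfolding set_lebesgue_integral_def by (rule Bochner_Integration.integral_cong) (auto simp: ind)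
    also have "\<dots> = (\<integral>p. indicator B (fst p) * h (snd p) \<partial>distr M (borel \<Otimes>\<^sub>M borel) (\<lambda>w. (W w, R w)))"
      by (subst integral_distr) (auto simp: B)
    also have "\<dots> = (\<integral>p. indicator B (fst p) * h (snd p) \<partial>(distr M borel W \<Otimes>\<^sub>M distr M borel R))"
      unfolding law ..
    also have "\<dots> = (\<integral>x. (\<integral>y. indicator B (fst (x, y)) * h (snd (x, y)) \<partial>distr M borel R) \<partial>distr M borel W)"
      by (rule P.integral_fst'[OF intP, symmetric])
    also have "\<dots> = (\<integral>x. indicator B x * c \<partial>distr M borel W)"
      unfolding c_def by (simp add: integral_distr)
    also have "\<dots> = (\<integral>w. indicator B (W w) * c \<partial>M)"
      by (subst integral_distr) (auto simp: B)
    also have "\<dots> = (\<integral>w\<in>A. c \<partial>M)"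
      unfolding set_lebesgue_integral_def by (rule Bochner_Integration.integral_cong) (auto simp: ind)
    finally show "(\<integral>w\<in>A. h (R w) \<partial>M) = (\<integral>w\<in>A. c \<partial>M)" .
  qed (auto simp: inth)
  then show ?thesis unfolding F_def c_def .
qed

lemma (in prob_space) cond_var_indep:
  fixes W :: "'a \<Rightarrow> 'b::topological_space" and R X :: "'a \<Rightarrow> real"
  assumes W[measurable]: "W \<in> borel_measurable M" and R[measurable]: "R \<in> borel_measurable M"
    and law: "distr M (borel \<Otimes>\<^sub>M borel) (\<lambda>w. (W w, R w)) = distr M borel W \<Otimes>\<^sub>M distr M borel R"
    and intR: "integrable M R" and intR2: "integrable M (\<lambda>w. (R w)\<^sup>2)"
    and g[measurable]: "g \<in> borel_measurable borel" and X: "\<And>w. X w = g (W w) + R w"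
    and intX: "integrable M X"
  shows "AE w in M. cond_var M (sigma_rv M W) X w = (\<integral>w. (R w - expectation R)\<^sup>2 \<partial>M)"
proof -
  define F where "F = sigma_rv M W"
  have Fv: "F = vimage_algebra (space M) W borel" unfolding F_def sigma_rv_def ..
  have subalg: "subalgebra M F"
    unfolding subalgebra_def Fv using sets_image_in_sets[OF refl W] by simp
  interpret finite_measure_subalgebra M F
    by unfold_locales (rule subalg)
  define c where "c = expectation R"
  have Xm[measurable]: "X \<in> borel_measurable M" using borel_measurable_integrable[OF intX] .
  have gWF: "(\<lambda>w. g (W w)) \<in> borel_measurable F"
    unfolding Fv by (rule measurable_compose[OF measurable_vimage_algebra1 g]) (use measurable_space[OF W] in auto)
  have intg: "integrable M (\<lambda>w. g (W w))"
  proof -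
    have "integrable M (\<lambda>w. X w - R w)" using intX intR by auto
    then show ?thesis by (simp add: X)
  qed
  have e1: "AE w in M. real_cond_exp M F X w = g (W w) + c"
  proof -
    have a: "AE w in M. real_cond_exp M F (\<lambda>w. g (W w) + R w) w = real_cond_exp M F (\<lambda>w. g (W w)) w + real_cond_exp M F R w"
      by (rule real_cond_exp_add[OF intg intR])
    have b: "AE w in M. real_cond_exp M F (\<lambda>w. g (W w)) w = g (W w)"
      by (rule real_cond_exp_F_meas[OF intg gWF])
    have c: "AE w in M. real_cond_exp M F (\<lambda>w. id (R w)) w = c"
      unfolding F_def c_def using cond_exp_indep_const[OF W R law, of id] intR by simp
    have "X = (\<lambda>w. g (W w) + R w)" using X by auto
    then show ?thesis using a b c by auto
  qed
  have e2: "AE w in M. (X w - real_cond_exp M F X w)\<^sup>2 = (R w - c)\<^sup>2"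
    using e1 by eventually_elim (simp add: X)
  have intRc: "integrable M (\<lambda>w. (R w - c)\<^sup>2)"
  proof -
    have "integrable M (\<lambda>w. (R w)\<^sup>2 - 2 * c * R w + c\<^sup>2)"
      using intR2 intR by auto
    then show ?thesis by (simp add: power2_diff algebra_simps)
  qed
  have "AE w in M. cond_var M F X w = real_cond_exp M F (\<lambda>w. (R w - c)\<^sup>2) w"
    unfolding cond_var_def
    by (rule real_cond_exp_cong[OF e2]) measurable
  moreover have "AE w in M. real_cond_exp M F (\<lambda>w. (\<lambda>r. (r - c)\<^sup>2) (R w)) w = (\<integral>w. (\<lambda>r. (r - c)\<^sup>2) (R w) \<partial>M)"
    unfolding F_def by (rule cond_exp_indep_const[OF W R law]) (use intRc in auto)
  ultimately show ?thesis unfolding F_def c_def by auto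
qed


context model
begin

lemma s2: "(sqrt (1 - beta))\<^sup>2 = 1 - beta" using b1 by simp
lemma r2: "(sqrt alpha)\<^sup>2 = alpha" using a0 by simp

lemma Q_nonneg: "0 \<le> Q c1 c2 c3 c4"
  unfolding Q_def by (rule add_nonneg_nonneg[OF add_nonneg_nonneg quad_nonneg[OF rho1]]) (use a1 b0 in auto)

lemma Q_hom: "Q (t * c1) (t * c2) (t * c3) (t * c4) = t\<^sup>2 * Q c1 c2 c3 c4"
  unfolding Q_def by (simp add: algebra_simps power2_eq_square)

lemma Q_simp: "Q c1 0 c3 c4 = c4\<^sup>2 * beta + (c3 + c4 * sqrt (1 - beta))\<^sup>2 + c1\<^sup>2 +
    2 * c1 * (c3 + c4 * sqrt (1 - beta)) * (sqrt alpha * rho)"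
proof -
  have "Q c1 0 c3 c4 = c4\<^sup>2 * beta + (c3 + c4 * sqrt (1 - beta))\<^sup>2 * (1 - alpha) + c1\<^sup>2 +
    2 * c1 * (c3 + c4 * sqrt (1 - beta)) * (sqrt alpha * rho) + (c3 + c4 * sqrt (1 - beta))\<^sup>2 * (sqrt alpha)\<^sup>2"
    unfolding Q_def using a0 b1 by (simp add: algebra_simps power2_eq_square)
  then show ?thesis unfolding r2 by (simp add: algebra_simps)
qed

lemma lin_meas[measurable]: "(\<lambda>w. c1 * XM0 w + c2 * XS0 w + c3 * XSt w + c4 * XSt1 w) \<in> borel_measurable M"
  by measurable

lemma lin_law: "distr M borel (\<lambda>w. c1 * XM0 w + c2 * XS0 w + c3 * XSt w + c4 * XSt1 w) = normal_measure 0 (Q c1 c2 c3 c4)"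
proof (rule levy_finite)
  show "finite_measure (distr M borel (\<lambda>w. c1 * XM0 w + c2 * XS0 w + c3 * XSt w + c4 * XSt1 w))"
    by (rule prob_space.axioms(1), rule prob_space_distr) measurable
  show "finite_measure (normal_measure 0 (Q c1 c2 c3 c4))"
    by (rule prob_space.axioms(1), rule prob_space_normal_measure, rule Q_nonneg)
  fix t
  have "(\<integral>x. iexp (t * x) \<partial>distr M borel (\<lambda>w. c1 * XM0 w + c2 * XS0 w + c3 * XSt w + c4 * XSt1 w))
     = (\<integral>w. iexp ((t * c1) * XM0 w + (t * c2) * XS0 w + (t * c3) * XSt w + (t * c4) * XSt1 w) \<partial>M)"
    by (subst integral_distr) (auto simp: algebra_simps)
  also have "\<dots> = complex_of_real (exp (- (t\<^sup>2 * Q c1 c2 c3 c4) / 2))"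
    unfolding charQ Q_hom ..
  also have "\<dots> = (\<integral>x. iexp (0 + t * x) \<partial>normal_measure 0 (Q c1 c2 c3 c4))"
    by (subst char_normal_measure) (auto simp: Q_nonneg)
  finally show "(\<integral>x. iexp (t * x) \<partial>distr M borel (\<lambda>w. c1 * XM0 w + c2 * XS0 w + c3 * XSt w + c4 * XSt1 w))
     = (\<integral>x. iexp (t * x) \<partial>normal_measure 0 (Q c1 c2 c3 c4))" by simp
qed simp_all

end

lemma (in prob_space) normal_moments:
  assumes law: "distr M borel L = normal_measure 0 q" and q: "q \<ge> 0" and Lm[measurable]: "L \<in> borel_measurable M"
  shows "integrable M L" "integrable M (\<lambda>w. (L w)\<^sup>2)" "expectation L = 0" "expectation (\<lambda>w. (L w)\<^sup>2) = q"
proof -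
  have N: "distr M borel L = distr std_normal_distribution borel (\<lambda>x. sqrt q * x)"
    using law normal_measure_distr[OF q, of 0] by simp
  have i1: "integrable std_normal_distribution (\<lambda>x. x ^ 1)" by (rule integrable_std_normal_distribution_moment)
  have i2: "integrable std_normal_distribution (\<lambda>x. x ^ 2)" by (rule integrable_std_normal_distribution_moment)
  have int_eq: "integrable M (\<lambda>w. f (L w)) \<longleftrightarrow> integrable std_normal_distribution (\<lambda>x. f (sqrt q * x))"
    if [measurable]: "f \<in> borel_measurable borel" for f :: "real \<Rightarrow> real"
  proof -
    have "integrable M (\<lambda>w. f (L w)) \<longleftrightarrow> integrable (distr M borel L) f"
      by (subst integrable_distr_eq) auto
    also have "\<dots> \<longleftrightarrow> integrable std_normal_distribution (\<lambda>x. f (sqrt q * x))"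
      unfolding N by (subst integrable_distr_eq) auto
    finally show ?thesis .
  qed
  have int_val: "(\<integral>w. f (L w) \<partial>M) = (\<integral>x. f (sqrt q * x) \<partial>std_normal_distribution)"
    if [measurable]: "f \<in> borel_measurable borel" for f :: "real \<Rightarrow> real"
  proof -
    have "(\<integral>w. f (L w) \<partial>M) = integral\<^sup>L (distr M borel L) f"
      by (subst integral_distr) auto
    also have "\<dots> = (\<integral>x. f (sqrt q * x) \<partial>std_normal_distribution)"
      unfolding N by (subst integral_distr) auto
    finally show ?thesis .
  qed
  show "integrable M L"
    using int_eq[of "\<lambda>x. x"] i1 by simp
  show "integrable M (\<lambda>w. (L w)\<^sup>2)"
    using int_eq[of "\<lambda>x. x\<^sup>2"] i2 q by (simp add: power_mult_distrib)
  show "expectation L = 0"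
    using int_val[of "\<lambda>x. x"] integral_std_normal_distribution_moment_odd[of 1] by simp
  show "expectation (\<lambda>w. (L w)\<^sup>2) = q"
    using int_val[of "\<lambda>x. x\<^sup>2"] std_normal_distribution_even_moments(1)[of 1] q by (simp add: power_mult_distrib)
qed


lemma alg1:
  fixes s beta u t :: real
  assumes "s\<^sup>2 = 1 - beta"
  shows "(u - t * s)\<^sup>2 * beta + (t + (u - t * s) * s)\<^sup>2 = (u\<^sup>2 * beta + (u * s)\<^sup>2) + ((t * s)\<^sup>2 * beta + (t - t * s * s)\<^sup>2)"
  using assms by algebra

lemma alg1v:
  fixes s beta :: real
  assumes "s\<^sup>2 = 1 - beta"
  shows "s\<^sup>2 * beta + (1 - s * s)\<^sup>2 = beta"
  using assms by algebra

definition Qs :: "real \<Rightarrow> real \<Rightarrow> real \<Rightarrow> real \<Rightarrow> real \<Rightarrow> real \<Rightarrow> real" where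
  "Qs beta s k c1 c3 c4 = c4\<^sup>2 * beta + (c3 + c4 * s)\<^sup>2 + c1\<^sup>2 + 2 * c1 * (c3 + c4 * s) * k"

lemma alg2:
  fixes s beta k a b u v t :: real
  assumes "s\<^sup>2 = 1 - beta" "a + b * k * s = s" "b + a * k * s = k"
  shows "Qs beta s k (v - t * b) t (u - t * a) = Qs beta s k v 0 u + Qs beta s k (- (t * b)) t (- (t * a))"
  using assms unfolding Qs_def by algebra

lemma alg3:
  fixes s beta k :: real
  assumes s2: "s\<^sup>2 = 1 - beta" and D: "0 < 1 - s\<^sup>2 * k\<^sup>2" and b0: "0 < beta"
  defines "a \<equiv> s * (1 - k\<^sup>2) / (1 - s\<^sup>2 * k\<^sup>2)" and "b \<equiv> k * beta / (1 - s\<^sup>2 * k\<^sup>2)"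
  shows "a + b * k * s = s" "b + a * k * s = k"
    and "Qs beta s k (- b) 1 (- a) \<le> beta * (1 - beta * k\<^sup>2)"
proof -
  define D where "D = 1 - s\<^sup>2 * k\<^sup>2"
  have Dn: "D \<noteq> 0" using D D_def by simp
  have aD: "a * D = s * (1 - k\<^sup>2)" unfolding a_def D_def using Dn D_def by simp
  have bD: "b * D = k * beta" unfolding b_def D_def using Dn D_def by simp
  have Dd: "D = 1 - s\<^sup>2 * k\<^sup>2" by (rule D_def)
  have "(a + b * k * s) * D = s * D" using aD bD Dd s2 by algebra
  then show e1: "a + b * k * s = s" using Dn by simp
  have "(b + a * k * s) * D = k * D" using aD bD Dd s2 by algebra
  then show e2: "b + a * k * s = k" using Dn by simp
  have "Qs beta s k (- b) 1 (- a) * D\<^sup>2 = beta * (1 - k\<^sup>2) * D"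
    unfolding Qs_def using aD bD Dd s2 by algebra
  then have "D * (Qs beta s k (- b) 1 (- a) * D - beta * (1 - k\<^sup>2)) = 0"
    by (simp add: algebra_simps power2_eq_square)
  then have "Qs beta s k (- b) 1 (- a) * D = beta * (1 - k\<^sup>2)" using Dn by simp
  then have v: "Qs beta s k (- b) 1 (- a) = beta * (1 - k\<^sup>2) / D"
    using Dn by (simp add: field_simps)
  have "beta * (1 - k\<^sup>2) \<le> beta * (1 - beta * k\<^sup>2) * D"
  proof -
    have "(1 - beta * k\<^sup>2) * D = 1 - k\<^sup>2 + beta * s\<^sup>2 * (k\<^sup>2)\<^sup>2"
      unfolding D_def using s2 by algebra
    moreover have "0 \<le> beta * s\<^sup>2 * (k\<^sup>2)\<^sup>2" using b0 by simp
    ultimately have "1 - k\<^sup>2 \<le> (1 - beta * k\<^sup>2) * D" by simp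
    then show ?thesis using b0 by (simp add: mult.assoc mult_left_mono)
  qed
  then show "Qs beta s k (- b) 1 (- a) \<le> beta * (1 - beta * k\<^sup>2)"
    unfolding v using D D_def by (simp add: divide_le_eq)
qed


context model
begin

lemma E_iexp:
  assumes "\<And>w. f w = c1 * XM0 w + c2 * XS0 w + c3 * XSt w + c4 * XSt1 w"
  shows "(\<integral>w. iexp (f w) \<partial>M) = complex_of_real (exp (- Q c1 c2 c3 c4 / 2))"
  unfolding charQ[symmetric] by (rule Bochner_Integration.integral_cong) (simp_all add: assms)

lemma iexp_mult: "iexp a * iexp b = iexp (a + b)"
  by (rule iexp_add[symmetric])

lemma exp_split: "A = B + C \<Longrightarrow> complex_of_real (exp (- A / 2)) = complex_of_real (exp (- B / 2)) * complex_of_real (exp (- C / 2))"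
proof -
  assume "A = B + C"
  then have "- A / 2 = - B / 2 + - C / 2" by simp
  then have "exp (- A / 2) = exp (- B / 2) * exp (- C / 2)" by (metis exp_add)
  then show ?thesis by (metis of_real_mult)
qed

lemma Q_Qs: "Q c1 0 c3 c4 = Qs beta (sqrt (1 - beta)) (sqrt alpha * rho) c1 c3 c4"
  unfolding Q_simp Qs_def ..

lemma s2': "(sqrt (1 - beta))\<^sup>2 = 1 - beta" by (rule s2)

lemma claim1: "AE w in M. cond_var M (sigma_rv M XSt1) XSt w = beta"
proof -
  define s where "s = sqrt (1 - beta)"
  have ss: "s\<^sup>2 = 1 - beta" unfolding s_def by (rule s2)
  define R where "R = (\<lambda>w. 0 * XM0 w + 0 * XS0 w + 1 * XSt w + (- s) * XSt1 w)"
  have Rm[measurable]: "R \<in> borel_measurable M" unfolding R_def by measurable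
  have law1: "distr M (borel \<Otimes>\<^sub>M borel) (\<lambda>w. (XSt1 w, R w)) = distr M borel XSt1 \<Otimes>\<^sub>M distr M borel R"
  proof (rule indep_law_cf[OF cf_det_base mt1 Rm])
    fix u t :: real
    have "(\<integral>w. iexp (u * XSt1 w) * iexp (t * R w) \<partial>M) = (\<integral>w. iexp (u * XSt1 w + t * R w) \<partial>M)"
      by (rule Bochner_Integration.integral_cong, rule refl, rule iexp_mult)
    also have "\<dots> = complex_of_real (exp (- Q 0 0 t (u - t * s) / 2))"
      by (rule E_iexp) (simp add: R_def algebra_simps)
    also have "\<dots> = complex_of_real (exp (- Q 0 0 0 u / 2)) * complex_of_real (exp (- Q 0 0 t (- (t * s)) / 2))"
    proof (rule exp_split)
      show "Q 0 0 t (u - t * s) = Q 0 0 0 u + Q 0 0 t (- (t * s))"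
        unfolding Q_Qs s_def[symmetric] Qs_def using alg1[OF ss, of u t]
        by (simp add: algebra_simps power2_eq_square)
    qed
    also have "\<dots> = (\<integral>w. iexp (u * XSt1 w) \<partial>M) * (\<integral>w. iexp (t * R w) \<partial>M)"
    proof -
      have e1: "(\<integral>w. iexp (u * XSt1 w) \<partial>M) = complex_of_real (exp (- Q 0 0 0 u / 2))"
        by (rule E_iexp) simp
      have e2: "(\<integral>w. iexp (t * R w) \<partial>M) = complex_of_real (exp (- Q 0 0 t (- (t * s)) / 2))"
        by (rule E_iexp) (simp add: R_def algebra_simps)
      show ?thesis unfolding e1 e2 ..
    qed
    finally show "(\<integral>w. iexp (u * XSt1 w) * iexp (t * R w) \<partial>M) = (\<integral>w. iexp (u * XSt1 w) \<partial>M) * (\<integral>w. iexp (t * R w) \<partial>M)" .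
  qed
  have Rlaw: "distr M borel R = normal_measure 0 (Q 0 0 1 (- s))" unfolding R_def by (rule lin_law)
  note mom = normal_moments[OF Rlaw Q_nonneg Rm]
  have Xlaw: "distr M borel (\<lambda>w. 0 * XM0 w + 0 * XS0 w + 1 * XSt w + 0 * XSt1 w) = normal_measure 0 (Q 0 0 1 0)" by (rule lin_law)
  have intX: "integrable M XSt"
    using normal_moments(1)[OF Xlaw Q_nonneg] by simp
  have "AE w in M. cond_var M (sigma_rv M XSt1) XSt w = (\<integral>w. (R w - expectation R)\<^sup>2 \<partial>M)"
  proof (rule cond_var_indep[OF mt1 Rm law1 mom(1) mom(2), where g="\<lambda>y. s * y"])
    show "XSt w = s * XSt1 w + R w" for w unfolding R_def by simp
  qed (auto simp: intX)
  moreover have "(\<integral>w. (R w - expectation R)\<^sup>2 \<partial>M) = beta"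
  proof -
    have "(\<integral>w. (R w - expectation R)\<^sup>2 \<partial>M) = Q 0 0 1 (- s)" using mom(3,4) by simp
    also have "\<dots> = beta" unfolding Q_Qs s_def[symmetric] Qs_def using alg1v[OF ss] by (simp add: power2_eq_square algebra_simps)
    finally show ?thesis .
  qed
  ultimately show ?thesis by simp
qed


lemma cf_det_2d: "cf_det (borel :: (real \<times> real) measure) (\<lambda>(i, t) (a, y). iexp (i * a) * iexp (t * y))"
  by (rule cf_det_cong[OF _ cf_det_step[OF cf_det_base]]) (simp only: borel_prod)

lemma claim2: "AE w in M. cond_var M (sigma_rv M (\<lambda>w. (XSt1 w, XM0 w))) XSt w \<le> beta * (1 - beta * rho\<^sup>2 * alpha)"
proof -
  define s where "s = sqrt (1 - beta)"
  have ss: "s\<^sup>2 = 1 - beta" unfolding s_def by (rule s2)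
  define k where "k = sqrt alpha * rho"
  have kk: "k\<^sup>2 = alpha * rho\<^sup>2" unfolding k_def using a0 by (simp add: power_mult_distrib)
  have rr: "rho\<^sup>2 \<le> 1" using rho1 by (simp add: abs_square_le_1)
  have Dpos: "0 < 1 - s\<^sup>2 * k\<^sup>2"
  proof -
    have "k\<^sup>2 \<le> alpha" unfolding kk using rr a0 by (simp add: mult_left_le)
    then have "k\<^sup>2 < 1" using a1 by simp
    moreover have "s\<^sup>2 \<le> 1" using ss b0 by simp
    moreover have "0 \<le> k\<^sup>2" by simp
    ultimately have "s\<^sup>2 * k\<^sup>2 \<le> 1 * k\<^sup>2" by (intro mult_right_mono) auto
    with \<open>k\<^sup>2 < 1\<close> have "s\<^sup>2 * k\<^sup>2 < 1" by simp
    then show ?thesis by simp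
  qed
  define a where "a = s * (1 - k\<^sup>2) / (1 - s\<^sup>2 * k\<^sup>2)"
  define b where "b = k * beta / (1 - s\<^sup>2 * k\<^sup>2)"
  note A3 = alg3[OF ss Dpos b0, folded a_def b_def]
  define R where "R = (\<lambda>w. (- b) * XM0 w + 0 * XS0 w + 1 * XSt w + (- a) * XSt1 w)"
  have Rm[measurable]: "R \<in> borel_measurable M" unfolding R_def by measurable
  define W where "W = (\<lambda>w. (XSt1 w, XM0 w))"
  have Wm[measurable]: "W \<in> borel_measurable M" unfolding W_def borel_prod[symmetric] by measurable
  have law2: "distr M (borel \<Otimes>\<^sub>M borel) (\<lambda>w. (W w, R w)) = distr M borel W \<Otimes>\<^sub>M distr M borel R"
  proof (rule indep_law_cf[OF cf_det_2d Wm Rm])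
    fix i :: "real \<times> real" and t :: real
    obtain u v where i: "i = (u, v)" by force
    have ph: "(case i of (i, t) \<Rightarrow> \<lambda>(a, y). iexp (i * a) * iexp (t * y)) (W w) = iexp (u * XSt1 w + v * XM0 w)" for w
      unfolding i W_def case_prod_conv by (rule iexp_mult)
    have e0: "(\<integral>w. (case i of (i, t) \<Rightarrow> \<lambda>(a, y). iexp (i * a) * iexp (t * y)) (W w) * iexp (t * R w) \<partial>M)
        = complex_of_real (exp (- Q (v - t * b) 0 t (u - t * a) / 2))"
    proof -
      have "(\<integral>w. (case i of (i, t) \<Rightarrow> \<lambda>(a, y). iexp (i * a) * iexp (t * y)) (W w) * iexp (t * R w) \<partial>M)
          = (\<integral>w. iexp ((u * XSt1 w + v * XM0 w) + t * R w) \<partial>M)"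
        by (rule Bochner_Integration.integral_cong, rule refl, unfold ph, rule iexp_mult)
      also have "\<dots> = complex_of_real (exp (- Q (v - t * b) 0 t (u - t * a) / 2))"
        by (rule E_iexp) (simp add: R_def algebra_simps)
      finally show ?thesis .
    qed
    have e1: "(\<integral>w. (case i of (i, t) \<Rightarrow> \<lambda>(a, y). iexp (i * a) * iexp (t * y)) (W w) \<partial>M)
        = complex_of_real (exp (- Q v 0 0 u / 2))"
      unfolding ph by (rule E_iexp) (simp add: algebra_simps)
    have e2: "(\<integral>w. iexp (t * R w) \<partial>M) = complex_of_real (exp (- Q (- (t * b)) 0 t (- (t * a)) / 2))"
      by (rule E_iexp) (simp add: R_def algebra_simps)
    have qq: "Q (v - t * b) 0 t (u - t * a) = Q v 0 0 u + Q (- (t * b)) 0 t (- (t * a))"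
      unfolding Q_Qs s_def[symmetric] k_def[symmetric] by (rule alg2[OF ss A3(1) A3(2)])
    show "(\<integral>w. (case i of (i, t) \<Rightarrow> \<lambda>(a, y). iexp (i * a) * iexp (t * y)) (W w) * iexp (t * R w) \<partial>M) =
        (\<integral>w. (case i of (i, t) \<Rightarrow> \<lambda>(a, y). iexp (i * a) * iexp (t * y)) (W w) \<partial>M) * (\<integral>w. iexp (t * R w) \<partial>M)"
      unfolding e0 e1 e2 by (rule exp_split[OF qq])
  qed
  have Rlaw: "distr M borel R = normal_measure 0 (Q (- b) 0 1 (- a))" unfolding R_def by (rule lin_law)
  note mom = normal_moments[OF Rlaw Q_nonneg Rm]
  have Xlaw: "distr M borel (\<lambda>w. 0 * XM0 w + 0 * XS0 w + 1 * XSt w + 0 * XSt1 w) = normal_measure 0 (Q 0 0 1 0)" by (rule lin_law)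
  have intX: "integrable M XSt"
    using normal_moments(1)[OF Xlaw Q_nonneg] by simp
  have gm: "(\<lambda>p :: real \<times> real. a * fst p + b * snd p) \<in> borel_measurable borel"
    unfolding borel_prod[symmetric] by measurable
  have "AE w in M. cond_var M (sigma_rv M W) XSt w = (\<integral>w. (R w - expectation R)\<^sup>2 \<partial>M)"
  proof (rule cond_var_indep[OF Wm Rm law2 mom(1) mom(2) gm])
    show "XSt w = a * fst (W w) + b * snd (W w) + R w" for w unfolding R_def W_def by simp
  qed (rule intX)
  moreover have "(\<integral>w. (R w - expectation R)\<^sup>2 \<partial>M) \<le> beta * (1 - beta * rho\<^sup>2 * alpha)"
  proof -
    have "(\<integral>w. (R w - expectation R)\<^sup>2 \<partial>M) = Q (- b) 0 1 (- a)" using mom(3,4) by simp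
    also have "\<dots> = Qs beta s k (- b) 1 (- a)" unfolding Q_Qs s_def k_def ..
    also have "\<dots> \<le> beta * (1 - beta * k\<^sup>2)" by (rule A3(3))
    also have "\<dots> = beta * (1 - beta * rho\<^sup>2 * alpha)" unfolding kk by (simp add: algebra_simps)
    finally show ?thesis .
  qed
  ultimately show ?thesis unfolding W_def by auto
qed

end


theorem lemma2:
  fixes M :: "'a measure"
    and XM0 XS0 XSt XSt1 :: "'a \<Rightarrow> real"
    and rho alpha beta :: real
  assumes "prob_space M"
    and "std_bivariate_normal M XM0 XS0 rho"
    and "XSt \<in> borel_measurable M" and "XSt1 \<in> borel_measurable M"
    and "0 < alpha" and "alpha < 1" and "0 < beta" and "beta < 1"
    and "distr M borel (\<lambda>w. (XM0 w, XS0 w, XSt w, XSt1 w)) =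
         distr M borel (\<lambda>w. (XM0 w, XS0 w)) \<bind>
           (\<lambda>(m, s). normal_measure (sqrt alpha * s) (1 - alpha) \<bind>
             (\<lambda>x. normal_measure (sqrt (1 - beta) * x) beta \<bind>
               (\<lambda>y. return borel (m, s, x, y))))"
  shows "(AE w in M. cond_var M (sigma_rv M XSt1) XSt w = beta) \<and>
         (AE w in M. cond_var M (sigma_rv M (\<lambda>w. (XSt1 w, XM0 w))) XSt w
                       \<le> beta * (1 - beta * rho\<^sup>2 * alpha))"
proof -
  interpret model M XM0 XS0 XSt XSt1 rho alpha beta
    by (rule model.intro) (rule assms)+
  show ?thesis using claim1 claim2 by simp
qed

end
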